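(* Consider the one-state softmax setting in the context, with the update $\theta_{t+1} = \theta_t + \eta_t(\hat r_t - \hat b_t)$ and on-policy sampling $a_t\sim\pi_{\theta_t}(\cdot)$. (1) If $\hat r_t(a) = \frac{\mathbb{I}\{a_t = a\}}{\pi_{\theta_t}(a)} r(a)$ (true mean reward observed) and $\eta_t = \eta > 0$ is constant, then for all $t\ge1$: $\pi_{\theta_{t+1}}^\top r - \pi_{\theta_t}^\top r \ge 0$ almost surely, and $$\mathbb{E}_t[\pi_{\theta_{t+1}}^\top r] - \pi_{\theta_t}^\top r \ge \frac{\eta}{1+\eta}\,\pi_{\theta_t}(a^* )\left(r(a^* ) - \pi_{\theta_t}^\top r\right)^2,$$ where $\mathbb{E}_t$ is over the sampling of $a_t\sim\pi_{\theta_t}(\cdot)$. (2) If $\hat r_t(a) = \frac{\mathbb{I}\{a_t = a\}}{\pi_{\theta_t}(a)} x_t(a)$ (sampled reward observed) and $\eta_t = \frac{\pi_{\theta_t}(a_t)\,|r(a_t) - \pi_{\theta_t}^\top r|}{8R_{\max}^2}$, then for all $t\ge 1$, $$\mathbb{E}_t[\pi_{\theta_{t+1}}^\top r] - \pi_{\theta_t}^\top r \ge \frac{1}{16 R_{\max}^2}\sum_{i=1}^K \pi_{\theta_t}(i)^2\left|r(i) - \pi_{\theta_t}^\top r\right|^3 \ge \frac{1}{16R_{\max}^2}\cdot\frac{\Delta}{K-1}\cdot\pi_{\theta_t}(a^* )^2\left(r(a^* ) - \pi_{\theta_t}^\top r\right)^2,$$ where $\mathbb{E}_t$ is over the sampling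 of $a_t\sim\pi_{\theta_t}(\cdot)$ and of the reward $x_t(a_t)\sim R_{a_t}$ given $\theta_t$.
   Context: Let $K\ge 2$, $r\in[0,1]^K$, $a^*\in\arg\max_a r(a)$, $\Delta := r(a^* ) - \max_{a\ne a^*} r(a)$. Softmax policy $\pi_\theta(a) = e^{\theta(a)}/\sum_{a'}e^{\theta(a')}$. For each action $a$, $R_a$ is a reward distribution supported on $[-R_{\max},R_{\max}]$ ($R_{\max}>0$) with mean $r(a)$. At iteration $t$, $a_t\sim\pi_{\theta_t}(\cdot)$ is sampled; in the sampled-reward case a reward $x_t(a_t)\sim R_{a_t}$ is observed and $x_t(a) := 0$ for $a\ne a_t$. The baseline vector is $\hat b_t(a) = \left(\frac{\mathbb{I}\{a_t=a\}}{\pi_{\theta_t}(a)} - 1\right)\pi_{\theta_t}^\top r$. *)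

theory Defs
  imports "HOL-Probability.Probability"
begin

text \<open>Actions are the elements of a finite type 'a (K = CARD('a)).\<close>

definition softmax :: "('a::finite \<Rightarrow> real) \<Rightarrow> 'a \<Rightarrow> real" where
  "softmax \<theta> a = exp (\<theta> a) / (\<Sum>a'\<in>UNIV. exp (\<theta> a'))"

definition exp_reward :: "('a::finite \<Rightarrow> real) \<Rightarrow> ('a \<Rightarrow> real) \<Rightarrow> real" where
  "exp_reward \<theta> r = (\<Sum>a\<in>UNIV. softmax \<theta> a * r a)"

definition baseline :: "('a::finite \<Rightarrow> real) \<Rightarrow> ('a \<Rightarrow> real) \<Rightarrow> 'a \<Rightarrow> 'a \<Rightarrow> real" where
  "baseline \<theta> r act a = ((if act = a then 1 else 0) / softmax \<theta> a - 1) * exp_reward \<theta> r"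

definition is_reward :: "('a::finite \<Rightarrow> real) \<Rightarrow> 'a \<Rightarrow> ('a \<Rightarrow> real) \<Rightarrow> 'a \<Rightarrow> real" where
  "is_reward \<theta> act x a = (if act = a then 1 else 0) / softmax \<theta> a * x a"

definition pg_update :: "('a \<Rightarrow> real) \<Rightarrow> real \<Rightarrow> ('a \<Rightarrow> real) \<Rightarrow> ('a \<Rightarrow> real) \<Rightarrow> 'a \<Rightarrow> real" where
  "pg_update \<theta> \<eta> rhat bhat a = \<theta> a + \<eta> * (rhat a - bhat a)"

definition sampled_vec :: "'a \<Rightarrow> real \<Rightarrow> 'a \<Rightarrow> real" where
  "sampled_vec act x a = (if a = act then x else 0)"

end

theory Submission
  imports Defs
begin
lemma sm_pos: "softmax (\<theta>::'a::finite\<Rightarrow>real) a > 0"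
  unfolding softmax_def by (intro divide_pos_pos exp_gt_zero sum_pos) auto

lemma sm_sum: "(\<Sum>a\<in>UNIV. softmax (\<theta>::'a::finite\<Rightarrow>real) a) = 1"
proof -
  have "(\<Sum>a'\<in>UNIV. exp (\<theta> a')) > 0" by (intro sum_pos) auto
  then show ?thesis unfolding softmax_def by (simp add: sum_divide_distrib[symmetric])
qed

lemma shift:
  fixes \<theta> :: "'a::finite \<Rightarrow> real"
  shows "exp_reward (\<lambda>a. \<theta> a + (if a = i then \<alpha> else 0) + \<beta>) r - exp_reward \<theta> r
    = softmax \<theta> i * (exp \<alpha> - 1) * (r i - exp_reward \<theta> r) / (1 + softmax \<theta> i * (exp \<alpha> - 1))"
proof -
  define S where "S = (\<Sum>a\<in>UNIV. exp (\<theta> a))"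
  define y where "y = exp \<alpha> - 1"
  define T where "T = (\<Sum>a\<in>UNIV. exp (\<theta> a) * r a)"
  have Sp: "S > 0" unfolding S_def by (intro sum_pos) auto
  have e: "exp (\<theta> a + (if a = i then \<alpha> else 0) + \<beta>) = exp \<beta> * (exp (\<theta> a) + (if a = i then exp (\<theta> i) * y else 0))" for a
    by (auto simp: exp_add y_def algebra_simps)
  have S': "(\<Sum>a\<in>UNIV. exp (\<theta> a + (if a = i then \<alpha> else 0) + \<beta>)) = exp \<beta> * (S + exp (\<theta> i) * y)"
    unfolding e by (simp add: sum_distrib_left[symmetric] sum.distrib S_def)
  have D: "S + exp (\<theta> i) * y > 0"
  proof -
    have "S \<ge> exp (\<theta> i)" unfolding S_def by (rule member_le_sum) auto
    moreover have "y > -1" unfolding y_def by simp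
    then have "exp (\<theta> i) * (-1) < exp (\<theta> i) * y" by (intro mult_strict_left_mono) auto
    ultimately show ?thesis by linarith
  qed
  have sm': "softmax (\<lambda>a. \<theta> a + (if a = i then \<alpha> else 0) + \<beta>) a = (exp (\<theta> a) + (if a = i then exp (\<theta> i) * y else 0)) / (S + exp (\<theta> i) * y)" for a
    unfolding softmax_def S' by (simp add: e)
  have J': "exp_reward (\<lambda>a. \<theta> a + (if a = i then \<alpha> else 0) + \<beta>) r = (T + exp (\<theta> i) * y * r i) / (S + exp (\<theta> i) * y)"
  proof -
    have "exp_reward (\<lambda>a. \<theta> a + (if a = i then \<alpha> else 0) + \<beta>) r
      = (\<Sum>a\<in>UNIV. (exp (\<theta> a) * r a + (if a = i then exp (\<theta> i) * y * r i else 0)) / (S + exp (\<theta> i) * y))"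
      unfolding exp_reward_def sm' by (intro sum.cong refl) (auto simp: algebra_simps)
    also have "\<dots> = (T + exp (\<theta> i) * y * r i) / (S + exp (\<theta> i) * y)"
      by (simp add: sum_divide_distrib[symmetric] sum.distrib T_def)
    finally show ?thesis .
  qed
  have J: "exp_reward \<theta> r = T / S"
    unfolding exp_reward_def softmax_def T_def S_def by (simp add: sum_divide_distrib[symmetric])
  have p: "softmax \<theta> i = exp (\<theta> i) / S" unfolding softmax_def S_def ..
  have D2: "1 + exp (\<theta> i) / S * y > 0" using D Sp by (simp add: field_simps)
  have D': "S + y * exp (\<theta> i) > 0" using D by (simp add: mult.commute)
  have q1: "S * (S + y * exp (\<theta> i)) > 0" using Sp D' by simp
  have q2: "S * (S * (S + y * exp (\<theta> i))) > 0" using Sp D' by simp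
  show ?thesis unfolding J' J p y_def[symmetric] using D Sp D2
    apply (simp add: field_simps)
    apply (subst frac_eq_eq)
    using q1 q2 apply (simp_all add: distrib_left)
    apply (simp add: algebra_simps)
    done
qed

lemma pg_form:
  fixes \<theta> :: "'a::finite \<Rightarrow> real"
  shows "pg_update \<theta> \<eta> (is_reward \<theta> i x) (baseline \<theta> r i)
    = (\<lambda>a. \<theta> a + (if a = i then \<eta> * (x i - exp_reward \<theta> r) / softmax \<theta> i else 0) + \<eta> * exp_reward \<theta> r)"
  unfolding pg_update_def is_reward_def baseline_def
  by (auto simp: fun_eq_iff field_simps diff_divide_distrib)

lemma exp_le_quad: assumes a: "\<bar>c::real\<bar> \<le> 1" shows "exp c \<le> 1 + c + c\<^sup>2"
proof (cases "c \<ge> 0")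
  case True then show ?thesis using exp_bound[of c] a by auto
next
  case False
  have "exp (-c) \<ge> 1 - c" using exp_ge_add_one_self[of "-c"] by simp
  then have "exp c \<le> 1 / (1 - c)" using False by (simp add: exp_minus field_simps)
  also have "\<dots> \<le> 1 + c + c\<^sup>2"
  proof -
    have c3: "c * (c * c) \<le> 0" using False by (simp add: mult_nonpos_nonneg)
    have "(1 - c) * (1 + c + c\<^sup>2) = 1 - c * (c * c)" by (simp add: algebra_simps power2_eq_square)
    then have "1 \<le> (1 - c) * (1 + c + c\<^sup>2)" using c3 by simp
    then show ?thesis using False by (simp add: divide_le_eq mult.commute)
  qed
  finally show ?thesis .
qed

lemma f_bound:
  fixes c p :: real
  assumes "\<bar>c\<bar> \<le> 1/4" "0 < p" "p \<le> 1"
  shows "\<bar>(exp c - 1) / (1 + p * (exp c - 1)) - c\<bar> \<le> c\<^sup>2"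
proof -
  define E where "E = exp c"
  define F where "F = exp (-c)"
  have EF: "E * F = 1" unfolding E_def F_def by (simp add: exp_minus)
  have E1: "E \<ge> 1 + c" unfolding E_def by (rule exp_ge_add_one_self)
  have F1: "F \<ge> 1 - c" unfolding F_def using exp_ge_add_one_self[of "-c"] by simp
  have E2: "E \<le> 1 + c + c\<^sup>2" unfolding E_def using assms by (intro exp_le_quad) auto
  have F2: "F \<le> 1 - c + c\<^sup>2" unfolding F_def using assms exp_le_quad[of "-c"] by auto
  have Ep: "E > 0" unfolding E_def by simp
  have Dp: "1 + p * (E - 1) > 0"
  proof -
    have "1 + p * (E - 1) = (1 - p) + p * E" by algebra
    moreover have "p * E > 0" using assms Ep by simp
    ultimately show ?thesis using assms by linarith
  qed
  have N1: "(E - 1 - c) - p*c*(E-1) + c\<^sup>2 * (1 + p*(E-1)) \<ge> 0"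
  proof -
    have a: "E - 1 - c + c\<^sup>2 \<ge> 0" using E1 zero_le_power2[of c] by linarith
    have b: "E - 1 - c*E + c\<^sup>2*E \<ge> 0"
    proof -
      have "E - 1 - c*E + c\<^sup>2*E = E * (1 - F - c + c\<^sup>2)" using EF by (simp add: algebra_simps)
      then show ?thesis using F2 Ep by simp
    qed
    have "(E - 1 - c) - p*c*(E-1) + c\<^sup>2 * (1 + p*(E-1)) = (1-p)*(E - 1 - c + c\<^sup>2) + p*(E - 1 - c*E + c\<^sup>2*E)"
      by (simp add: algebra_simps power2_eq_square)
    then show ?thesis using a b assms by simp
  qed
  have N2: "c\<^sup>2 * (1 + p*(E-1)) - ((E - 1 - c) - p*c*(E-1)) \<ge> 0"
  proof -
    have a: "c\<^sup>2 - E + 1 + c \<ge> 0" using E2 by simp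
    have b: "c\<^sup>2*E - (E - 1 - c*E) \<ge> 0"
    proof -
      have "c\<^sup>2*E - (E - 1 - c*E) = E * (c\<^sup>2 - 1 + F + c)" using EF by (simp add: algebra_simps)
      moreover have "c\<^sup>2 - 1 + F + c \<ge> 0" using F1 zero_le_power2[of c] by linarith
      ultimately show ?thesis using Ep by simp
    qed
    have "c\<^sup>2 * (1 + p*(E-1)) - ((E - 1 - c) - p*c*(E-1)) = (1-p)*(c\<^sup>2 - E + 1 + c) + p*(c\<^sup>2*E - (E - 1 - c*E))"
      by (simp add: algebra_simps power2_eq_square)
    then show ?thesis using a b assms by simp
  qed
  have eq: "(E - 1) / (1 + p * (E - 1)) - c = ((E - 1 - c) - p*c*(E-1)) / (1 + p*(E-1))"
    using Dp by (simp add: field_simps)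
  show ?thesis unfolding E_def[symmetric] eq using Dp N1 N2
    by (simp add: abs_le_iff divide_le_eq le_divide_eq)
qed


lemma den_pos: fixes p a :: real assumes "0 < p" "p \<le> 1" shows "1 + p * (exp a - 1) > 0"
proof -
  have "1 + p * (exp a - 1) = (1 - p) + p * exp a" by algebra
  moreover have "p * exp a > 0" using assms by simp
  ultimately show ?thesis using assms by linarith
qed

lemma part1_term:
  fixes p \<eta> \<delta> :: real
  assumes "0 < p" "p \<le> 1" "\<eta> > 0"
  shows "p * (exp (\<eta> * \<delta> / p) - 1) * \<delta> / (1 + p * (exp (\<eta> * \<delta> / p) - 1)) \<ge> 0"
proof -
  have "(exp (\<eta> * \<delta> / p) - 1) * \<delta> \<ge> 0"
  proof (cases "\<delta> \<ge> 0")
    case True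
    then have "\<eta> * \<delta> / p \<ge> 0" using assms by simp
    then have "exp (\<eta> * \<delta> / p) \<ge> 1" by simp
    then show ?thesis using True by simp
  next
    case False
    then have "\<eta> * \<delta> / p < 0" using assms by (simp add: divide_neg_pos mult_pos_neg)
    then have "exp (\<eta> * \<delta> / p) < 1" by simp
    then show ?thesis using False by (simp add: mult_nonpos_nonpos)
  qed
  then show ?thesis using den_pos[OF assms(1,2), of "\<eta> * \<delta> / p"] assms
    by (simp add: mult.assoc)
qed

lemma part1_astar:
  fixes p \<eta> d :: real
  assumes "0 < p" "p \<le> 1" "\<eta> > 0" "0 \<le> d" "d \<le> 1"
  shows "p * (p * (exp (\<eta> * d / p) - 1) * d / (1 + p * (exp (\<eta> * d / p) - 1))) \<ge> \<eta> / (1 + \<eta>) * p * d\<^sup>2"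
proof -
  define X where "X = p * (exp (\<eta> * d / p) - 1)"
  have "exp (\<eta> * d / p) - 1 \<ge> \<eta> * d / p" using exp_ge_add_one_self[of "\<eta> * d / p"] by linarith
  then have "X \<ge> p * (\<eta> * d / p)" unfolding X_def using assms by (intro mult_left_mono) auto
  then have Xge: "X \<ge> \<eta> * d" using assms by simp
  have ed: "\<eta> * d \<ge> 0" using assms by simp
  have q1: "0 < 1 + \<eta> * d" using ed by linarith
  have q2: "0 < 1 + \<eta>" using assms by linarith
  have p1: "0 < (1 + \<eta>) * (1 + \<eta> * d)" using q1 q2 by simp
  have "\<eta> * d \<le> \<eta>" using assms by (simp add: mult_left_le)
  then have "\<eta> * d / (1 + \<eta>) \<le> \<eta> * d / (1 + \<eta> * d)"
    using ed p1 by (intro divide_left_mono) auto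
  also have "\<eta> * d / (1 + \<eta> * d) \<le> X / (1 + X)"
    using Xge ed by (simp add: divide_simps) (simp add: algebra_simps)
  finally have k: "\<eta> * d / (1 + \<eta>) \<le> X / (1 + X)" .
  have "\<eta> / (1 + \<eta>) * p * d\<^sup>2 = (p * d) * (\<eta> * d / (1 + \<eta>))" by (simp add: power2_eq_square)
  also have "\<dots> \<le> (p * d) * (X / (1 + X))" using k assms by (intro mult_left_mono) auto
  also have "\<dots> = p * (X * d / (1 + X))" by simp
  finally show ?thesis unfolding X_def .
qed

lemma part2_pt:
  fixes p s \<delta> J y :: real
  assumes "0 < p" "p \<le> 1" "s > 0" "\<bar>\<delta>\<bar> \<le> s" "0 \<le> J" "J \<le> s" "\<bar>y\<bar> \<le> s"
  defines "c \<equiv> \<bar>\<delta>\<bar> * (y - J) / (8 * s\<^sup>2)"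
  shows "p * (exp c - 1) * \<delta> / (1 + p * (exp c - 1))
      \<ge> p * (\<delta> * \<bar>\<delta>\<bar> * (y - J) / (8 * s\<^sup>2) - \<bar>\<delta>\<bar> ^ 3 / (16 * s\<^sup>2))"
proof -
  have yJ: "\<bar>y - J\<bar> \<le> 2 * s" using assms by linarith
  have s2: "s\<^sup>2 > 0" using assms by simp
  have "\<bar>\<delta>\<bar> * \<bar>y - J\<bar> \<le> s * (2 * s)" using assms yJ by (intro mult_mono) auto
  then have "\<bar>\<delta>\<bar> * \<bar>y - J\<bar> / (8 * s\<^sup>2) \<le> s * (2 * s) / (8 * s\<^sup>2)" using s2
    by (intro divide_right_mono) auto
  then have "\<bar>c\<bar> \<le> s * (2 * s) / (8 * s\<^sup>2)" unfolding c_def using s2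
    by (simp add: abs_mult)
  also have "\<dots> = 1/4" using assms(3) by (simp add: power2_eq_square)
  finally have cb: "\<bar>c\<bar> \<le> 1/4" .
  define f where "f = (exp c - 1) / (1 + p * (exp c - 1))"
  have fb: "\<bar>f - c\<bar> \<le> c\<^sup>2" unfolding f_def using f_bound[OF cb assms(1,2)] .
  have "\<delta> * (f - c) \<ge> - (\<bar>\<delta>\<bar> * c\<^sup>2)"
  proof -
    have "\<bar>\<delta> * (f - c)\<bar> \<le> \<bar>\<delta>\<bar> * c\<^sup>2" using fb by (simp add: abs_mult mult_left_mono)
    then show ?thesis by linarith
  qed
  moreover have "\<bar>\<delta>\<bar> * c\<^sup>2 \<le> \<bar>\<delta>\<bar> ^ 3 / (16 * s\<^sup>2)"
  proof -
    have "(y - J)\<^sup>2 \<le> (2 * s)\<^sup>2" using power_mono[OF yJ, of 2] by simp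
    then have "\<delta>\<^sup>2 * (y - J)\<^sup>2 \<le> \<delta>\<^sup>2 * (2 * s)\<^sup>2" by (intro mult_left_mono) auto
    then have "\<delta>\<^sup>2 * (y - J)\<^sup>2 / (8 * s\<^sup>2)\<^sup>2 \<le> \<delta>\<^sup>2 * (2 * s)\<^sup>2 / (8 * s\<^sup>2)\<^sup>2"
      by (intro divide_right_mono) auto
    moreover have "c\<^sup>2 = \<delta>\<^sup>2 * (y - J)\<^sup>2 / (8 * s\<^sup>2)\<^sup>2" unfolding c_def
      by (simp add: power_divide power_mult_distrib)
    ultimately have "c\<^sup>2 \<le> \<delta>\<^sup>2 * (2 * s)\<^sup>2 / (8 * s\<^sup>2)\<^sup>2" by simp
    also have "\<dots> = \<delta>\<^sup>2 / (16 * s\<^sup>2)" using s2 by (simp add: power2_eq_square field_simps)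
    finally have "c\<^sup>2 \<le> \<delta>\<^sup>2 / (16 * s\<^sup>2)" .
    then have "\<bar>\<delta>\<bar> * c\<^sup>2 \<le> \<bar>\<delta>\<bar> * (\<delta>\<^sup>2 / (16 * s\<^sup>2))" by (intro mult_left_mono) auto
    also have "\<dots> = \<bar>\<delta>\<bar> ^ 3 / (16 * s\<^sup>2)" by (simp add: power2_eq_square power3_eq_cube)
    finally show ?thesis .
  qed
  ultimately have "\<delta> * f \<ge> \<delta> * c - \<bar>\<delta>\<bar> ^ 3 / (16 * s\<^sup>2)" by (simp add: algebra_simps)
  moreover have "\<delta> * c = \<delta> * \<bar>\<delta>\<bar> * (y - J) / (8 * s\<^sup>2)" unfolding c_def by simp
  ultimately have "\<delta> * f \<ge> \<delta> * \<bar>\<delta>\<bar> * (y - J) / (8 * s\<^sup>2) - \<bar>\<delta>\<bar> ^ 3 / (16 * s\<^sup>2)" by simp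
  then have "p * (\<delta> * f) \<ge> p * (\<delta> * \<bar>\<delta>\<bar> * (y - J) / (8 * s\<^sup>2) - \<bar>\<delta>\<bar> ^ 3 / (16 * s\<^sup>2))"
    using assms by (intro mult_left_mono) auto
  then show ?thesis unfolding f_def by (simp add: algebra_simps)
qed


lemma J_le_max:
  fixes \<theta> r :: "'a::finite \<Rightarrow> real"
  assumes "\<forall>a. r a \<le> m"
  shows "exp_reward \<theta> r \<le> m"
proof -
  have "exp_reward \<theta> r \<le> (\<Sum>a\<in>UNIV. softmax \<theta> a * m)"
    unfolding exp_reward_def using assms sm_pos[of \<theta>]
    by (intro sum_mono mult_left_mono) (auto intro: less_imp_le)
  also have "\<dots> = m" by (simp add: sum_distrib_right[symmetric] sm_sum)
  finally show ?thesis .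
qed

lemma J_ge_min:
  fixes \<theta> r :: "'a::finite \<Rightarrow> real"
  assumes "\<forall>a. m \<le> r a"
  shows "m \<le> exp_reward \<theta> r"
proof -
  have "(\<Sum>a\<in>UNIV. softmax \<theta> a * m) \<le> exp_reward \<theta> r"
    unfolding exp_reward_def using assms sm_pos[of \<theta>]
    by (intro sum_mono mult_left_mono) (auto intro: less_imp_le)
  moreover have "(\<Sum>a\<in>UNIV. softmax \<theta> a * m) = m" by (simp add: sum_distrib_right[symmetric] sm_sum)
  ultimately show ?thesis by simp
qed

lemma sm_le1: "softmax (\<theta>::'a::finite\<Rightarrow>real) a \<le> 1"
proof -
  have "softmax \<theta> a \<le> (\<Sum>a\<in>UNIV. softmax \<theta> a)"
    by (rule member_le_sum) (auto intro: less_imp_le sm_pos)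
  then show ?thesis by (simp add: sm_sum)
qed

lemma centered:
  fixes \<theta> r :: "'a::finite \<Rightarrow> real"
  shows "(\<Sum>a\<in>UNIV. softmax \<theta> a * (r a - exp_reward \<theta> r)) = 0"
  by (simp add: right_diff_distrib sum_subtractf sum_distrib_right[symmetric] sm_sum exp_reward_def)

lemma part2_sum:
  fixes r \<theta> :: "'a::finite \<Rightarrow> real"
  assumes K2: "CARD('a) \<ge> 2" and ast: "\<forall>a. r a \<le> r astar"
  shows "(\<Sum>i\<in>UNIV. softmax \<theta> i ^ 2 * \<bar>r i - exp_reward \<theta> r\<bar> ^ 3)
     \<ge> ((r astar - Max (r ` (UNIV - {astar}))) / (real CARD('a) - 1)) * softmax \<theta> astar ^ 2 * (r astar - exp_reward \<theta> r)\<^sup>2"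
proof -
  define p where "p = softmax \<theta>"
  define J where "J = exp_reward \<theta> r"
  define A where "A = (UNIV::'a set) - {astar}"
  define M where "M = Max (r ` A)"
  define \<Delta> where "\<Delta> = r astar - M"
  define d where "d = r astar - J"
  define k where "k = real CARD('a) - 1"
  have pp: "\<And>a. p a > 0" unfolding p_def by (rule sm_pos)
  have d0: "d \<ge> 0" unfolding d_def J_def using J_le_max[OF ast] by simp
  have cardA: "card A = CARD('a) - 1" unfolding A_def by (simp add: card_Diff_singleton)
  have kA: "real (card A) = k" unfolding cardA k_def using K2 by (simp add: of_nat_diff)
  have k1: "k \<ge> 1" unfolding k_def using K2 by simp
  have Ane: "A \<noteq> {}" using cardA K2 by auto
  have finA: "finite A" by simp
  have rM: "\<And>i. i \<in> A \<Longrightarrow> r i \<le> M" unfolding M_def using finA by (intro Max_ge) auto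
  have Mle: "M \<le> r astar" unfolding M_def using finA Ane ast by (subst Max_le_iff) auto
  have D0: "\<Delta> \<ge> 0" unfolding \<Delta>_def using Mle by simp
  have split: "(\<Sum>i\<in>UNIV. f i) = f astar + (\<Sum>i\<in>A. f i)" for f :: "'a \<Rightarrow> real"
    unfolding A_def by (rule sum.remove) auto
  have c0: "(\<Sum>i\<in>UNIV. p i * (r i - J)) = 0" unfolding p_def J_def by (rule centered)
  then have "p astar * d + (\<Sum>i\<in>A. p i * (r i - J)) = 0" unfolding split d_def by simp
  then have sA: "(\<Sum>i\<in>A. p i * (r i - J)) = - (p astar * d)" by simp
  have c1: "(\<Sum>i\<in>A. p i * \<bar>r i - J\<bar>) \<ge> p astar * d"
  proof -
    have "\<bar>\<Sum>i\<in>A. p i * (r i - J)\<bar> \<le> (\<Sum>i\<in>A. \<bar>p i * (r i - J)\<bar>)" by (rule sum_abs)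
    also have "\<dots> = (\<Sum>i\<in>A. p i * \<bar>r i - J\<bar>)" using pp by (intro sum.cong refl) (simp add: abs_mult less_imp_le)
    finally show ?thesis using sA d0 pp[of astar] by simp
  qed
  have c2: "(p astar * d)\<^sup>2 \<le> (\<Sum>i\<in>A. (p i * \<bar>r i - J\<bar>)\<^sup>2) * k"
  proof -
    have "(p astar * d)\<^sup>2 \<le> (\<Sum>i\<in>A. p i * \<bar>r i - J\<bar>)\<^sup>2"
      using c1 d0 pp[of astar] by (intro power_mono) auto
    also have "\<dots> \<le> (\<Sum>i\<in>A. (p i * \<bar>r i - J\<bar>)\<^sup>2) * card A" by (rule sum_squared_le_sum_of_squares)
    finally show ?thesis using kA by simp
  qed
  define m where "m = max 0 (\<Delta> - d)"
  have m0: "m \<ge> 0" unfolding m_def by simp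
  have mi: "\<And>i. i \<in> A \<Longrightarrow> \<bar>r i - J\<bar> \<ge> m"
  proof -
    fix i assume "i \<in> A"
    then have "r i \<le> M" by (rule rM)
    then have "J - r i \<ge> \<Delta> - d" unfolding \<Delta>_def d_def by simp
    then show "\<bar>r i - J\<bar> \<ge> m" unfolding m_def by simp
  qed
  have c3: "(\<Sum>i\<in>A. p i ^ 2 * \<bar>r i - J\<bar> ^ 3) \<ge> m * (\<Sum>i\<in>A. (p i * \<bar>r i - J\<bar>)\<^sup>2)"
  proof -
    have "m * (\<Sum>i\<in>A. (p i * \<bar>r i - J\<bar>)\<^sup>2) = (\<Sum>i\<in>A. (p i * \<bar>r i - J\<bar>)\<^sup>2 * m)"
      by (simp add: sum_distrib_left mult.commute)
    also have "\<dots> \<le> (\<Sum>i\<in>A. (p i * \<bar>r i - J\<bar>)\<^sup>2 * \<bar>r i - J\<bar>)"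
      using mi by (intro sum_mono mult_left_mono) auto
    also have "\<dots> = (\<Sum>i\<in>A. p i ^ 2 * \<bar>r i - J\<bar> ^ 3)"
      by (intro sum.cong refl) (simp add: power2_eq_square power3_eq_cube)
    finally show ?thesis .
  qed
  define Q where "Q = (p astar * d)\<^sup>2"
  have Q0: "Q \<ge> 0" unfolding Q_def by simp
  have c4: "(\<Sum>i\<in>A. p i ^ 2 * \<bar>r i - J\<bar> ^ 3) \<ge> m * Q / k"
  proof -
    have "Q / k \<le> (\<Sum>i\<in>A. (p i * \<bar>r i - J\<bar>)\<^sup>2)" using c2 k1 unfolding Q_def
      by (simp add: divide_le_eq)
    then have "m * (Q / k) \<le> m * (\<Sum>i\<in>A. (p i * \<bar>r i - J\<bar>)\<^sup>2)" using m0 by (rule mult_left_mono)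
    then show ?thesis using c3 by simp
  qed
  have fin: "d + m / k \<ge> \<Delta> / k"
  proof (cases "\<Delta> \<le> d")
    case True
    then have "\<Delta> / k \<le> \<Delta>" using k1 D0 by (simp add: divide_le_eq mult_le_cancel_left1 mult_left_le)
    moreover have "m / k \<ge> 0" using m0 k1 by simp
    ultimately show ?thesis using True by linarith
  next
    case False
    then have "m = \<Delta> - d" unfolding m_def by simp
    moreover have "d / k \<le> d" using k1 d0 by (simp add: divide_le_eq mult_le_cancel_left1)
    ultimately show ?thesis using k1 by (simp add: diff_divide_distrib)
  qed
  have "(\<Delta> / k) * Q \<le> (d + m / k) * Q" using fin Q0 by (rule mult_right_mono)
  also have "\<dots> = p astar ^ 2 * \<bar>d\<bar> ^ 3 + m * Q / k" unfolding Q_def using d0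
    by (simp add: algebra_simps power2_eq_square power3_eq_cube)
  also have "\<dots> \<le> p astar ^ 2 * \<bar>r astar - J\<bar> ^ 3 + (\<Sum>i\<in>A. p i ^ 2 * \<bar>r i - J\<bar> ^ 3)"
    using c4 unfolding d_def by simp
  also have "\<dots> = (\<Sum>i\<in>UNIV. p i ^ 2 * \<bar>r i - J\<bar> ^ 3)" by (rule split[symmetric])
  finally show ?thesis unfolding Q_def p_def J_def \<Delta>_def M_def A_def k_def d_def
    by (simp add: power_mult_distrib mult.assoc mult.commute mult.left_commute)
qed


lemma gen:
  fixes \<theta> r x :: "'a::finite \<Rightarrow> real"
  shows "exp_reward (pg_update \<theta> \<eta> (is_reward \<theta> i x) (baseline \<theta> r i)) r
    = exp_reward \<theta> r + softmax \<theta> i * (exp (\<eta> * (x i - exp_reward \<theta> r) / softmax \<theta> i) - 1) * (r i - exp_reward \<theta> r)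
       / (1 + softmax \<theta> i * (exp (\<eta> * (x i - exp_reward \<theta> r) / softmax \<theta> i) - 1))"
  using shift[of \<theta> i "\<eta> * (x i - exp_reward \<theta> r) / softmax \<theta> i" "\<eta> * exp_reward \<theta> r" r]
  unfolding pg_form by simp

lemma ER_bounds:
  fixes \<theta> r :: "'a::finite \<Rightarrow> real"
  assumes "\<forall>a. 0 \<le> r a \<and> r a \<le> 1"
  shows "0 \<le> exp_reward \<theta> r" "exp_reward \<theta> r \<le> 1"
  using J_ge_min[of 0 r \<theta>] J_le_max[of r 1 \<theta>] assms by auto

lemma part2_action:
  fixes \<theta> r :: "'a::finite \<Rightarrow> real" and M :: "real measure"
  assumes P: "prob_space M" and sM: "sets M = sets borel" and supp: "AE x in M. \<bar>x\<bar> \<le> s"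
    and mean: "(\<integral>x. x \<partial>M) = r i" and s0: "s > 0" and r01: "\<forall>a. 0 \<le> r a \<and> r a \<le> 1"
    and rs: "\<forall>a. r a \<le> s"
  shows "(\<integral>y. exp_reward (pg_update \<theta> (softmax \<theta> i * \<bar>r i - exp_reward \<theta> r\<bar> / (8 * s\<^sup>2))
              (is_reward \<theta> i (sampled_vec i y)) (baseline \<theta> r i)) r \<partial>M)
     \<ge> exp_reward \<theta> r + softmax \<theta> i * \<bar>r i - exp_reward \<theta> r\<bar> ^ 3 / (16 * s\<^sup>2)"
proof -
  interpret prob_space M by (rule P)
  define J where "J = exp_reward \<theta> r"
  define p where "p = softmax \<theta> i"
  define \<delta> where "\<delta> = r i - J"
  have pp: "0 < p" "p \<le> 1" unfolding p_def by (auto intro: sm_pos sm_le1)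
  have J0: "0 \<le> J" unfolding J_def using ER_bounds[OF r01] by simp
  have Js: "J \<le> s" unfolding J_def using J_le_max[of r s \<theta>] rs by simp
  have ds: "\<bar>\<delta>\<bar> \<le> s" unfolding \<delta>_def using J0 Js rs[rule_format, of i] r01[rule_format, of i] unfolding abs_le_iff by linarith
  define G where "G = (\<lambda>y. J + p * (exp (\<bar>\<delta>\<bar> * (y - J) / (8 * s\<^sup>2)) - 1) * \<delta> / (1 + p * (exp (\<bar>\<delta>\<bar> * (y - J) / (8 * s\<^sup>2)) - 1)))"
  have eqG: "exp_reward (pg_update \<theta> (p * \<bar>\<delta>\<bar> / (8 * s\<^sup>2)) (is_reward \<theta> i (sampled_vec i y)) (baseline \<theta> r i)) r = G y" for y
  proof -
    have "p * \<bar>\<delta>\<bar> / (8 * s\<^sup>2) * (sampled_vec i y i - J) / p = \<bar>\<delta>\<bar> * (y - J) / (8 * s\<^sup>2)"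
      using pp by (simp add: sampled_vec_def)
    then show ?thesis unfolding gen G_def J_def[symmetric] p_def[symmetric] \<delta>_def by simp
  qed
  have measM: "measurable M borel = measurable borel borel" by (rule measurable_cong_sets[OF sM refl])
  have Gm: "G \<in> borel_measurable M" unfolding measM G_def by measurable
  have Gb: "\<bar>G y\<bar> \<le> 1" for y
  proof -
    have "G y = exp_reward (pg_update \<theta> (p * \<bar>\<delta>\<bar> / (8 * s\<^sup>2)) (is_reward \<theta> i (sampled_vec i y)) (baseline \<theta> r i)) r"
      by (rule eqG[symmetric])
    then show ?thesis using ER_bounds[OF r01, of "pg_update \<theta> (p * \<bar>\<delta>\<bar> / (8 * s\<^sup>2)) (is_reward \<theta> i (sampled_vec i y)) (baseline \<theta> r i)"]
      unfolding abs_le_iff by linarith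
  qed
  have intG: "integrable M G" by (rule integrable_const_bound[where B=1]) (use Gb Gm in auto)
  have idm: "(\<lambda>x. x) \<in> borel_measurable M" unfolding measM by simp
  have intx: "integrable M (\<lambda>x. x)" by (rule integrable_const_bound[where B=s]) (use supp idm in auto)
  define a0 where "a0 = J + p * (- (\<delta> * \<bar>\<delta>\<bar> * J / (8 * s\<^sup>2)) - \<bar>\<delta>\<bar> ^ 3 / (16 * s\<^sup>2))"
  define b0 where "b0 = p * (\<delta> * \<bar>\<delta>\<bar> / (8 * s\<^sup>2))"
  have Lform: "J + p * (\<delta> * \<bar>\<delta>\<bar> * (y - J) / (8 * s\<^sup>2) - \<bar>\<delta>\<bar> ^ 3 / (16 * s\<^sup>2)) = a0 + b0 * y" for y
    unfolding a0_def b0_def by (simp add: algebra_simps diff_divide_distrib)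
  have AE: "AE y in M. a0 + b0 * y \<le> G y"
    using supp
  proof eventually_elim
    case (elim y)
    show ?case unfolding Lform[symmetric] G_def
      using part2_pt[OF pp s0 ds J0 Js elim] by simp
  qed
  have "(\<integral>y. a0 + b0 * y \<partial>M) \<le> integral\<^sup>L M G"
    by (rule integral_mono_AE) (use intx intG AE in auto)
  moreover have "(\<integral>y. a0 + b0 * y \<partial>M) = a0 + b0 * r i"
    using intx mean by (simp add: prob_space)
  moreover have "a0 + b0 * r i = J + p * \<bar>\<delta>\<bar> ^ 3 / (16 * s\<^sup>2)"
  proof -
    have "a0 + b0 * r i = J + p * (\<delta> * \<bar>\<delta>\<bar> * \<delta> / (8 * s\<^sup>2) - \<bar>\<delta>\<bar> ^ 3 / (16 * s\<^sup>2))"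
      unfolding Lform[symmetric] \<delta>_def by simp
    also have "\<delta> * \<bar>\<delta>\<bar> * \<delta> = \<bar>\<delta>\<bar> ^ 3" by (simp add: power3_eq_cube abs_mult_self_eq)
    finally show ?thesis by (simp add: field_simps power2_eq_square)
  qed
  moreover have "integral\<^sup>L M G = (\<integral>y. exp_reward (pg_update \<theta> (softmax \<theta> i * \<bar>r i - exp_reward \<theta> r\<bar> / (8 * s\<^sup>2))
              (is_reward \<theta> i (sampled_vec i y)) (baseline \<theta> r i)) r \<partial>M)"
    using eqG unfolding p_def \<delta>_def J_def by simp
  ultimately show ?thesis unfolding p_def \<delta>_def J_def by simp
qed

theorem lemma1:
  fixes r :: "'a::finite \<Rightarrow> real"
    and \<theta> :: "'a \<Rightarrow> real"
    and astar :: 'a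
    and \<eta> :: real
    and Rmax :: real
    and R :: "'a \<Rightarrow> real measure"
  assumes K2: "CARD('a) \<ge> 2"
    and r01: "\<forall>a. 0 \<le> r a \<and> r a \<le> 1"
    and astar: "\<forall>a. r a \<le> r astar"
    and eta_pos: "\<eta> > 0"
    and Rmax_pos: "Rmax > 0"
    and R_prob: "\<forall>a. prob_space (R a)"
    and R_borel: "\<forall>a. sets (R a) = sets borel"
    and R_supp: "\<forall>a. AE x in R a. \<bar>x\<bar> \<le> Rmax"
    and R_mean: "\<forall>a. (\<integral>x. x \<partial>R a) = r a"
  shows
    "(\<forall>act. exp_reward (pg_update \<theta> \<eta> (is_reward \<theta> act r) (baseline \<theta> r act)) r
              - exp_reward \<theta> r \<ge> 0)
   \<and> (\<Sum>act\<in>UNIV. softmax \<theta> act *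
          exp_reward (pg_update \<theta> \<eta> (is_reward \<theta> act r) (baseline \<theta> r act)) r)
       - exp_reward \<theta> r
     \<ge> \<eta> / (1 + \<eta>) * softmax \<theta> astar * (r astar - exp_reward \<theta> r)\<^sup>2
   \<and> (let J = exp_reward \<theta> r;
         \<eta>t = (\<lambda>act. softmax \<theta> act * \<bar>r act - J\<bar> / (8 * Rmax\<^sup>2));
         \<Delta> = r astar - Max (r ` (UNIV - {astar}));
         EJ = (\<Sum>act\<in>UNIV. softmax \<theta> act *
                 (\<integral>x. exp_reward (pg_update \<theta> (\<eta>t act) (is_reward \<theta> act (sampled_vec act x))
                                   (baseline \<theta> r act)) r \<partial>R act))
     in EJ - J \<ge> 1 / (16 * Rmax\<^sup>2) * (\<Sum>i\<in>UNIV. softmax \<theta> i ^ 2 * \<bar>r i - J\<bar> ^ 3)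
      \<and> 1 / (16 * Rmax\<^sup>2) * (\<Sum>i\<in>UNIV. softmax \<theta> i ^ 2 * \<bar>r i - J\<bar> ^ 3)
          \<ge> 1 / (16 * Rmax\<^sup>2) * (\<Delta> / (real CARD('a) - 1))
             * softmax \<theta> astar ^ 2 * (r astar - J)\<^sup>2)"
proof -
  define p where "p = softmax \<theta>"
  define J where "J = exp_reward \<theta> r"
  have pp: "\<And>a. 0 < p a" "\<And>a. p a \<le> 1" unfolding p_def by (auto intro: sm_pos sm_le1)
  have J0: "0 \<le> J" and J1: "J \<le> 1" unfolding J_def using ER_bounds[OF r01] by auto
  have Jst: "J \<le> r astar" unfolding J_def using J_le_max[of r "r astar" \<theta>] astar by simp
  have t1: "\<And>act. exp_reward (pg_update \<theta> \<eta> (is_reward \<theta> act r) (baseline \<theta> r act)) r - J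
     = p act * (exp (\<eta> * (r act - J) / p act) - 1) * (r act - J) / (1 + p act * (exp (\<eta> * (r act - J) / p act) - 1))"
    unfolding gen p_def J_def by simp
  have P1: "\<forall>act. exp_reward (pg_update \<theta> \<eta> (is_reward \<theta> act r) (baseline \<theta> r act)) r - J \<ge> 0"
    using t1 part1_term[OF pp(1) pp(2) eta_pos] by simp
  have P2: "(\<Sum>act\<in>UNIV. p act * exp_reward (pg_update \<theta> \<eta> (is_reward \<theta> act r) (baseline \<theta> r act)) r) - J
     \<ge> \<eta> / (1 + \<eta>) * p astar * (r astar - J)\<^sup>2"
  proof -
    have "(\<Sum>act\<in>UNIV. p act * exp_reward (pg_update \<theta> \<eta> (is_reward \<theta> act r) (baseline \<theta> r act)) r) - J
      = (\<Sum>act\<in>UNIV. p act * (exp_reward (pg_update \<theta> \<eta> (is_reward \<theta> act r) (baseline \<theta> r act)) r - J))"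
      unfolding p_def by (simp add: right_diff_distrib sum_subtractf sum_distrib_right[symmetric] sm_sum)
    also have "\<dots> \<ge> p astar * (exp_reward (pg_update \<theta> \<eta> (is_reward \<theta> astar r) (baseline \<theta> r astar)) r - J)"
      proof (rule member_le_sum)
      fix a :: 'a
      have "0 \<le> p a" using pp(1)[of a] by simp
      moreover have "0 \<le> exp_reward (pg_update \<theta> \<eta> (is_reward \<theta> a r) (baseline \<theta> r a)) r - J" using P1 by blast
      ultimately show "0 \<le> p a * (exp_reward (pg_update \<theta> \<eta> (is_reward \<theta> a r) (baseline \<theta> r a)) r - J)"
        by (rule mult_nonneg_nonneg)
    qed auto
    moreover have "p astar * (exp_reward (pg_update \<theta> \<eta> (is_reward \<theta> astar r) (baseline \<theta> r astar)) r - J)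
       \<ge> \<eta> / (1 + \<eta>) * p astar * (r astar - J)\<^sup>2"
      proof -
      have "r astar \<le> 1" using r01 by blast
      then have "r astar - J \<le> 1" using J0 by linarith
      moreover have "0 \<le> r astar - J" using Jst by simp
      ultimately show ?thesis unfolding t1 using part1_astar[OF pp(1)[of astar] pp(2)[of astar] eta_pos, of "r astar - J"]
        by simp
    qed
    ultimately show ?thesis by linarith
  qed
  have rs: "\<forall>a. r a \<le> Rmax"
  proof
    fix a
    interpret prob_space "R a" using R_prob by simp
    have measM: "measurable (R a) borel = measurable borel borel"
      by (rule measurable_cong_sets[OF R_borel[rule_format] refl])
    have idm: "(\<lambda>x. x) \<in> borel_measurable (R a)" unfolding measM by simp
    have intx: "integrable (R a) (\<lambda>x. x)"
      by (rule integrable_const_bound[where B=Rmax]) (use R_supp idm in auto)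
    have "(\<integral>x. x \<partial>R a) \<le> Rmax"
      by (rule integral_le_const[OF intx]) (use R_supp[rule_format, of a] in \<open>rule eventually_mono, auto\<close>)
    then show "r a \<le> Rmax" using R_mean by simp
  qed
  define s where "s = Rmax"
  have P3: "(\<Sum>act\<in>UNIV. p act *
                 (\<integral>x. exp_reward (pg_update \<theta> (p act * \<bar>r act - J\<bar> / (8 * Rmax\<^sup>2)) (is_reward \<theta> act (sampled_vec act x))
                                   (baseline \<theta> r act)) r \<partial>R act)) - J
     \<ge> 1 / (16 * Rmax\<^sup>2) * (\<Sum>i\<in>UNIV. p i ^ 2 * \<bar>r i - J\<bar> ^ 3)"
  proof -
    have "(\<Sum>act\<in>UNIV. p act *
                 (\<integral>x. exp_reward (pg_update \<theta> (p act * \<bar>r act - J\<bar> / (8 * Rmax\<^sup>2)) (is_reward \<theta> act (sampled_vec act x))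
                                   (baseline \<theta> r act)) r \<partial>R act)) - J
       = (\<Sum>act\<in>UNIV. p act *
                 ((\<integral>x. exp_reward (pg_update \<theta> (p act * \<bar>r act - J\<bar> / (8 * Rmax\<^sup>2)) (is_reward \<theta> act (sampled_vec act x))
                                   (baseline \<theta> r act)) r \<partial>R act) - J))"
      unfolding p_def by (simp add: right_diff_distrib sum_subtractf sum_distrib_right[symmetric] sm_sum)
    also have "\<dots> \<ge> (\<Sum>act\<in>UNIV. p act * (p act * \<bar>r act - J\<bar> ^ 3 / (16 * Rmax\<^sup>2)))"
    proof (rule sum_mono)
      fix act :: 'a
      have "(\<integral>x. exp_reward (pg_update \<theta> (p act * \<bar>r act - J\<bar> / (8 * Rmax\<^sup>2)) (is_reward \<theta> act (sampled_vec act x))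
                                   (baseline \<theta> r act)) r \<partial>R act) \<ge> J + p act * \<bar>r act - J\<bar> ^ 3 / (16 * Rmax\<^sup>2)"
        unfolding p_def J_def
        by (rule part2_action) (use R_prob R_borel R_supp R_mean Rmax_pos r01 rs in auto)
      then show "p act * (p act * \<bar>r act - J\<bar> ^ 3 / (16 * Rmax\<^sup>2)) \<le> p act *
                 ((\<integral>x. exp_reward (pg_update \<theta> (p act * \<bar>r act - J\<bar> / (8 * Rmax\<^sup>2)) (is_reward \<theta> act (sampled_vec act x))
                                   (baseline \<theta> r act)) r \<partial>R act) - J)"
        using pp(1)[of act] by (intro mult_left_mono) auto
    qed
    moreover have "(\<Sum>act\<in>UNIV. p act * (p act * \<bar>r act - J\<bar> ^ 3 / (16 * Rmax\<^sup>2)))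
       = 1 / (16 * Rmax\<^sup>2) * (\<Sum>i\<in>UNIV. p i ^ 2 * \<bar>r i - J\<bar> ^ 3)"
      by (simp add: sum_distrib_left power2_eq_square mult.assoc)
    ultimately show ?thesis by linarith
  qed
  have P4: "1 / (16 * Rmax\<^sup>2) * (\<Sum>i\<in>UNIV. p i ^ 2 * \<bar>r i - J\<bar> ^ 3)
          \<ge> 1 / (16 * Rmax\<^sup>2) * ((r astar - Max (r ` (UNIV - {astar}))) / (real CARD('a) - 1))
             * p astar ^ 2 * (r astar - J)\<^sup>2"
    using mult_left_mono[OF part2_sum[OF K2 astar, of \<theta>], of "1 / (16 * Rmax\<^sup>2)"]
    unfolding p_def J_def by (simp add: mult.assoc)
  show ?thesis
    using P1 P2 P3 P4 unfolding Let_def p_def J_def by simp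
qed

end
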